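(* Let $X$ be a compactum and define $l X: M_\cup X\to I^{C(X,I)}$ by $$lX(\nu)(\varphi)=\max\{\nu(\varphi^{-1}([s,1]))\cdot s: s\in(0,1]\},\qquad \nu\in M_\cup X,\ \varphi\in C(X,I).$$ Let $SX\subset I^{C(X,I)}$ be the set of all functionals $\upsilon: C(X,I)\to I$ such that (1) $\upsilon(1_X)=1$, where $1_X$ is the constant function $1$; (2) $\upsilon(\lambda\cdot\varphi)=\lambda\cdot\upsilon(\varphi)$ for all $\lambda\in I$ and $\varphi\in C(X,I)$; (3) $\upsilon(\max\{\psi,\varphi\})=\max\{\upsilon(\psi),\upsilon(\varphi)\}$ for all $\psi,\varphi\in C(X,I)$ (maximum taken pointwise on the left). Then $lX(M_\cup X)=SX$.
   Context: A compactum is a compact Hausdorff space; $I=[0,1]$; $C(X,I)$ is the set of continuous maps $X\to I$. An (upper-semicontinuous) capacity on a compactum $X$ is a function $\nu$ from the closed subsets of $X$ to $I$ such that: (1) $\nu(X)=1$, $\nu(\emptyset)=0$; (2) if $F\subset G$ then $\nu(F)\le\nu(G)$; (3) if $\nu(F)<a$ then there is an open set $O\supset F$ with $\nu(B)<a$ for every closed $B\subset O$. A capacity $\nu$ is a possibility capacity if $\nu(A\cup B)=\max\{\nu(A),\nu(B)\}$ for all closed $A,B\subset X$; $M_\cup X$ denotes the set of possibility capacities on $X$. (The maximum in the definition of $lX$ exists.) *)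

theory Defs
  imports "HOL-Analysis.Analysis"
begin

text \<open>C(X,I): continuous maps from the space X into I = [0,1], represented as
  functions that are extensional on topspace X (value undefined outside).\<close>
definition CXI :: "'a topology \<Rightarrow> ('a \<Rightarrow> real) set" where
  "CXI X = {\<phi>. continuous_map X (subtopology euclideanreal {0..1}) \<phi>
                \<and> \<phi> \<in> extensional (topspace X)}"

definition capacity :: "'a topology \<Rightarrow> ('a set \<Rightarrow> real) \<Rightarrow> bool" where
  "capacity X \<nu> \<longleftrightarrow>
     \<nu> \<in> extensional {F. closedin X F}
   \<and> (\<forall>F. closedin X F \<longrightarrow> \<nu> F \<in> {0..1})
   \<and> \<nu> (topspace X) = 1 \<and> \<nu> {} = 0
   \<and> (\<forall>F G. closedin X F \<and> closedin X G \<and> F \<subseteq> G \<longrightarrow> \<nu> F \<le> \<nu> G)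
   \<and> (\<forall>F a. closedin X F \<and> \<nu> F < a \<longrightarrow>
        (\<exists>U. openin X U \<and> F \<subseteq> U \<and> (\<forall>B. closedin X B \<and> B \<subseteq> U \<longrightarrow> \<nu> B < a)))"

definition possibility_capacities :: "'a topology \<Rightarrow> ('a set \<Rightarrow> real) set" where
  "possibility_capacities X = {\<nu>. capacity X \<nu> \<and>
     (\<forall>A B. closedin X A \<and> closedin X B \<longrightarrow> \<nu> (A \<union> B) = max (\<nu> A) (\<nu> B))}"

text \<open>lX(\<nu>)(\<phi>) = max{\<nu>(\<phi>^-1[s,1]) * s : s in (0,1]} (the maximum exists, so it equals the supremum);
  lX(\<nu>) is an element of I^{C(X,I)}, represented extensionally on CXI X.\<close>
definition lX :: "'a topology \<Rightarrow> ('a set \<Rightarrow> real) \<Rightarrow> (('a \<Rightarrow> real) \<Rightarrow> real)" where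
  "lX X \<nu> = restrict (\<lambda>\<phi>. (SUP s\<in>{0<..1::real}. \<nu> {x \<in> topspace X. \<phi> x \<in> {s..1}} * s)) (CXI X)"

definition SX :: "'a topology \<Rightarrow> (('a \<Rightarrow> real) \<Rightarrow> real) set" where
  "SX X = {\<upsilon>. \<upsilon> \<in> extensional (CXI X) \<and> (\<forall>\<phi>\<in>CXI X. \<upsilon> \<phi> \<in> {0..1})
     \<and> \<upsilon> (restrict (\<lambda>x. 1) (topspace X)) = 1
     \<and> (\<forall>c\<in>{0..1::real}. \<forall>\<phi>\<in>CXI X.
          \<upsilon> (restrict (\<lambda>x. c * \<phi> x) (topspace X)) = c * \<upsilon> \<phi>)
     \<and> (\<forall>\<psi>\<in>CXI X. \<forall>\<phi>\<in>CXI X.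
          \<upsilon> (restrict (\<lambda>x. max (\<psi> x) (\<phi> x)) (topspace X)) = max (\<upsilon> \<psi>) (\<upsilon> \<phi>))}"

end

theory Submission
  imports Defs
begin

definition lvl :: "'a topology \<Rightarrow> ('a \<Rightarrow> real) \<Rightarrow> real \<Rightarrow> 'a set" where
  "lvl X \<phi> s = {x \<in> topspace X. \<phi> x \<in> {s..1}}"

definition Lv :: "'a topology \<Rightarrow> ('a set \<Rightarrow> real) \<Rightarrow> ('a \<Rightarrow> real) \<Rightarrow> real" where
  "Lv X \<nu> \<phi> = (SUP s\<in>{0<..1::real}. \<nu> (lvl X \<phi> s) * s)"

lemma CXI_iff: "\<phi> \<in> CXI X \<longleftrightarrow> continuous_map X euclideanreal \<phi> \<and> (\<forall>x\<in>topspace X. \<phi> x \<in> {0..1})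
   \<and> \<phi> \<in> extensional (topspace X)"
  by (auto simp: CXI_def continuous_map_in_subtopology)

lemma restrict_CXI:
  assumes "continuous_map X euclideanreal f" "\<And>x. x\<in>topspace X \<Longrightarrow> 0 \<le> f x \<and> f x \<le> 1"
  shows "restrict f (topspace X) \<in> CXI X"
proof -
  have "continuous_map X euclideanreal (restrict f (topspace X))"
    using assms(1) by (rule continuous_map_eq) auto
  then show ?thesis using assms(2) by (auto simp: CXI_iff)
qed

lemma CXI_cont: "\<phi> \<in> CXI X \<Longrightarrow> continuous_map X euclideanreal \<phi>"
  by (simp add: CXI_iff)

lemma CXI_range: "\<phi> \<in> CXI X \<Longrightarrow> x \<in> topspace X \<Longrightarrow> 0 \<le> \<phi> x \<and> \<phi> x \<le> 1"
  by (auto simp: CXI_iff)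

lemma CXI_eqI: "\<phi> \<in> CXI X \<Longrightarrow> \<psi> \<in> CXI X \<Longrightarrow> (\<And>x. x\<in>topspace X \<Longrightarrow> \<phi> x = \<psi> x) \<Longrightarrow> \<phi> = \<psi>"
  by (auto simp: CXI_iff intro: extensionalityI)

lemma CXI_restrict_self: "\<phi> \<in> CXI X \<Longrightarrow> restrict \<phi> (topspace X) = \<phi>"
  by (simp add: CXI_iff extensional_restrict)

lemma lvl_closed: "\<phi> \<in> CXI X \<Longrightarrow> closedin X (lvl X \<phi> s)"
  unfolding lvl_def by (rule closedin_continuous_map_preimage[OF CXI_cont]) auto

lemma lvl_mem: "x \<in> lvl X \<phi> s \<longleftrightarrow> x \<in> topspace X \<and> s \<le> \<phi> x \<and> \<phi> x \<le> 1"
  by (auto simp: lvl_def)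

lemma one_CXI: "restrict (\<lambda>x. 1) (topspace X) \<in> CXI X"
  by (rule restrict_CXI) auto

lemma zero_CXI: "restrict (\<lambda>x. 0) (topspace X) \<in> CXI X"
  by (rule restrict_CXI) auto

lemma SX_range: "\<upsilon> \<in> SX X \<Longrightarrow> \<phi> \<in> CXI X \<Longrightarrow> 0 \<le> \<upsilon> \<phi> \<and> \<upsilon> \<phi> \<le> 1"
  by (auto simp: SX_def)

lemma SX_one: "\<upsilon> \<in> SX X \<Longrightarrow> \<upsilon> (restrict (\<lambda>x. 1) (topspace X)) = 1"
  by (auto simp: SX_def)

lemma SX_smult: "\<upsilon> \<in> SX X \<Longrightarrow> 0 \<le> c \<Longrightarrow> c \<le> 1 \<Longrightarrow> \<phi> \<in> CXI X \<Longrightarrow>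
   \<upsilon> (restrict (\<lambda>x. c * \<phi> x) (topspace X)) = c * \<upsilon> \<phi>"
  by (auto simp: SX_def)

lemma SX_max: "\<upsilon> \<in> SX X \<Longrightarrow> \<psi> \<in> CXI X \<Longrightarrow> \<phi> \<in> CXI X \<Longrightarrow>
   \<upsilon> (restrict (\<lambda>x. max (\<psi> x) (\<phi> x)) (topspace X)) = max (\<upsilon> \<psi>) (\<upsilon> \<phi>)"
  by (auto simp: SX_def)

lemma SX_zero: "\<upsilon> \<in> SX X \<Longrightarrow> \<upsilon> (restrict (\<lambda>x. 0) (topspace X)) = 0"
  using SX_smult[of \<upsilon> X 0 "restrict (\<lambda>x. 1) (topspace X)"] one_CXI[of X]
  by (simp add: restrict_def)

lemma SX_mono:
  assumes "\<upsilon> \<in> SX X" "\<phi> \<in> CXI X" "\<psi> \<in> CXI X" "\<And>x. x\<in>topspace X \<Longrightarrow> \<phi> x \<le> \<psi> x"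
  shows "\<upsilon> \<phi> \<le> \<upsilon> \<psi>"
proof -
  have "restrict (\<lambda>x. max (\<phi> x) (\<psi> x)) (topspace X) = restrict \<psi> (topspace X)"
    using assms(4) by (auto simp: restrict_def fun_eq_iff max_def)
  then have "\<upsilon> \<psi> = max (\<upsilon> \<phi>) (\<upsilon> \<psi>)"
    using SX_max[OF assms(1,2,3)] CXI_restrict_self[OF assms(3)] by simp
  then show ?thesis by simp
qed

lemma cap_range: "capacity X \<nu> \<Longrightarrow> closedin X F \<Longrightarrow> 0 \<le> \<nu> F \<and> \<nu> F \<le> 1"
  by (auto simp: capacity_def)

lemma cap_top: "capacity X \<nu> \<Longrightarrow> \<nu> (topspace X) = 1"
  by (auto simp: capacity_def)

lemma cap_empty: "capacity X \<nu> \<Longrightarrow> \<nu> {} = 0"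
  by (auto simp: capacity_def)

lemma term_bounds: "capacity X \<nu> \<Longrightarrow> \<phi> \<in> CXI X \<Longrightarrow> s \<in> {0<..1} \<Longrightarrow>
   0 \<le> \<nu> (lvl X \<phi> s) * s \<and> \<nu> (lvl X \<phi> s) * s \<le> 1"
  using cap_range[OF _ lvl_closed, of X \<nu> \<phi> s] by (auto intro: mult_le_one)

lemma Lv_upper: "capacity X \<nu> \<Longrightarrow> \<phi> \<in> CXI X \<Longrightarrow> s \<in> {0<..1} \<Longrightarrow> \<nu> (lvl X \<phi> s) * s \<le> Lv X \<nu> \<phi>"
  unfolding Lv_def by (rule cSUP_upper) (auto intro!: bdd_aboveI2 dest: term_bounds)

lemma Lv_least: "(\<And>s. s \<in> {0<..1} \<Longrightarrow> \<nu> (lvl X \<phi> s) * s \<le> M) \<Longrightarrow> Lv X \<nu> \<phi> \<le> M"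
  unfolding Lv_def by (rule cSUP_least) auto

lemma Lv_range: "capacity X \<nu> \<Longrightarrow> \<phi> \<in> CXI X \<Longrightarrow> 0 \<le> Lv X \<nu> \<phi> \<and> Lv X \<nu> \<phi> \<le> 1"
proof
  assume a: "capacity X \<nu>" "\<phi> \<in> CXI X"
  show "0 \<le> Lv X \<nu> \<phi>"
    using Lv_upper[OF a, of 1] term_bounds[OF a, of 1] by simp
  show "Lv X \<nu> \<phi> \<le> 1"
    by (rule Lv_least) (use term_bounds[OF a] in auto)
qed

lemma lX_eq: "\<phi> \<in> CXI X \<Longrightarrow> lX X \<nu> \<phi> = Lv X \<nu> \<phi>"
  by (simp add: lX_def Lv_def lvl_def)


lemma Lv_one: "capacity X \<nu> \<Longrightarrow> Lv X \<nu> (restrict (\<lambda>x. 1) (topspace X)) = 1"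
proof -
  assume c: "capacity X \<nu>"
  have e: "lvl X (restrict (\<lambda>x. 1) (topspace X)) s = topspace X" if "s \<in> {0<..1}" for s
    using that by (auto simp: lvl_def)
  show ?thesis
  proof (rule antisym)
    show "Lv X \<nu> (restrict (\<lambda>x. 1) (topspace X)) \<le> 1"
      by (rule Lv_least) (simp add: e cap_top[OF c])
    show "1 \<le> Lv X \<nu> (restrict (\<lambda>x. 1) (topspace X))"
      using Lv_upper[OF c one_CXI, of 1] e[of 1] cap_top[OF c] by simp
  qed
qed

lemma smult_CXI: "\<phi> \<in> CXI X \<Longrightarrow> 0 \<le> c \<Longrightarrow> c \<le> 1 \<Longrightarrow> restrict (\<lambda>x. c * \<phi> x) (topspace X) \<in> CXI X"
proof -
  assume a: "\<phi> \<in> CXI X" "0 \<le> c" "c \<le> 1"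
  have "continuous_map X euclideanreal (\<lambda>x. c * \<phi> x)"
    using CXI_cont[OF a(1)] by (auto intro: continuous_intros)
  moreover have "0 \<le> c * \<phi> x \<and> c * \<phi> x \<le> 1" if "x \<in> topspace X" for x
    using CXI_range[OF a(1) that] a by (auto intro: mult_le_one)
  ultimately show ?thesis by (rule restrict_CXI)
qed

lemma max_CXI: "\<phi> \<in> CXI X \<Longrightarrow> \<psi> \<in> CXI X \<Longrightarrow> restrict (\<lambda>x. max (\<phi> x) (\<psi> x)) (topspace X) \<in> CXI X"
proof -
  assume a: "\<phi> \<in> CXI X" "\<psi> \<in> CXI X"
  have "continuous_map X euclideanreal (\<lambda>x. max (\<phi> x) (\<psi> x))"
    using CXI_cont[OF a(1)] CXI_cont[OF a(2)] by (auto intro: continuous_intros)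
  moreover have "0 \<le> max (\<phi> x) (\<psi> x) \<and> max (\<phi> x) (\<psi> x) \<le> 1" if "x \<in> topspace X" for x
    using CXI_range[OF a(1) that] CXI_range[OF a(2) that] by auto
  ultimately show ?thesis by (rule restrict_CXI)
qed

lemma Lv_smult:
  assumes c: "capacity X \<nu>" and p: "\<phi> \<in> CXI X" and c0: "0 \<le> c" and c1: "c \<le> 1"
  shows "Lv X \<nu> (restrict (\<lambda>x. c * \<phi> x) (topspace X)) = c * Lv X \<nu> \<phi>"
proof -
  define \<phi>c where "\<phi>c = restrict (\<lambda>x. c * \<phi> x) (topspace X)"
  have pc: "\<phi>c \<in> CXI X" unfolding \<phi>c_def by (rule smult_CXI[OF p c0 c1])
  show ?thesis
  proof (cases "c = 0")
    case True
    have e: "lvl X \<phi>c s = {}" if "s \<in> {0<..1}" for s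
      using that True by (auto simp: lvl_def \<phi>c_def)
    have "Lv X \<nu> \<phi>c \<le> 0"
      by (rule Lv_least) (simp add: e cap_empty[OF c])
    then show ?thesis using Lv_range[OF c pc] True \<phi>c_def by simp
  next
    case False
    then have cp: "c > 0" using c0 by simp
    have e1: "lvl X \<phi>c s = lvl X \<phi> (s / c)" if "s \<le> c" for s
    proof -
      have "x \<in> topspace X \<Longrightarrow> c * \<phi> x \<le> 1" for x
        using CXI_range[OF p, of x] c1 c0 by (auto intro: mult_le_one)
      then show ?thesis using cp CXI_range[OF p]
        by (auto simp: lvl_def \<phi>c_def pos_divide_le_eq mult.commute)
    qed
    have e2: "lvl X \<phi>c s = {}" if "s > c" for s
    proof -
      have "x \<in> topspace X \<Longrightarrow> c * \<phi> x \<le> c" for x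
        using CXI_range[OF p, of x] c0 by (auto intro: mult_left_le)
      then show ?thesis using that by (force simp: lvl_def \<phi>c_def)
    qed
    show ?thesis
      unfolding \<phi>c_def[symmetric]
    proof (rule antisym)
      show "Lv X \<nu> \<phi>c \<le> c * Lv X \<nu> \<phi>"
      proof (rule Lv_least)
        fix s :: real assume s: "s \<in> {0<..1}"
        show "\<nu> (lvl X \<phi>c s) * s \<le> c * Lv X \<nu> \<phi>"
        proof (cases "s \<le> c")
          case True
          have sc: "s / c \<in> {0<..1}" using s True cp by auto
          have "\<nu> (lvl X \<phi>c s) * s = c * (\<nu> (lvl X \<phi> (s/c)) * (s/c))"
            using e1[OF True] cp by simp
          also have "\<dots> \<le> c * Lv X \<nu> \<phi>"
            using Lv_upper[OF c p sc] c0 by (rule mult_left_mono)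
          finally show ?thesis .
        next
          case False
          then show ?thesis using e2[of s] cap_empty[OF c] Lv_range[OF c p] c0 by simp
        qed
      qed
      have "Lv X \<nu> \<phi> \<le> Lv X \<nu> \<phi>c / c"
      proof (rule Lv_least)
        fix t :: real assume t: "t \<in> {0<..1}"
        have ct: "c * t \<in> {0<..1}" using t cp c1 by (auto intro: mult_le_one)
        have "lvl X \<phi>c (c * t) = lvl X \<phi> t"
          using e1[of "c*t"] t cp c1 by (simp add: mult_le_one)
        then have "\<nu> (lvl X \<phi> t) * t * c = \<nu> (lvl X \<phi>c (c*t)) * (c*t)"
          by (simp add: ac_simps)
        also have "\<dots> \<le> Lv X \<nu> \<phi>c"
          using Lv_upper[OF c pc ct] .
        finally show "\<nu> (lvl X \<phi> t) * t \<le> Lv X \<nu> \<phi>c / c"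
          using cp by (simp add: pos_le_divide_eq)
      qed
      then show "c * Lv X \<nu> \<phi> \<le> Lv X \<nu> \<phi>c"
        using cp by (simp add: pos_le_divide_eq mult.commute)
    qed
  qed
qed

lemma Lv_max:
  assumes n: "\<nu> \<in> possibility_capacities X" and p: "\<psi> \<in> CXI X" and q: "\<phi> \<in> CXI X"
  shows "Lv X \<nu> (restrict (\<lambda>x. max (\<psi> x) (\<phi> x)) (topspace X)) = max (Lv X \<nu> \<psi>) (Lv X \<nu> \<phi>)"
proof -
  have c: "capacity X \<nu>" using n by (simp add: possibility_capacities_def)
  define m where "m = restrict (\<lambda>x. max (\<psi> x) (\<phi> x)) (topspace X)"
  have mc: "m \<in> CXI X" unfolding m_def by (rule max_CXI[OF p q])
  have e: "lvl X m s = lvl X \<psi> s \<union> lvl X \<phi> s" for s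
    using CXI_range[OF p] CXI_range[OF q] by (auto simp: lvl_def m_def max_def)
  have t: "\<nu> (lvl X m s) * s = max (\<nu> (lvl X \<psi> s) * s) (\<nu> (lvl X \<phi> s) * s)" if "s > 0" for s
  proof -
    have "\<nu> (lvl X m s) = max (\<nu> (lvl X \<psi> s)) (\<nu> (lvl X \<phi> s))"
      using n lvl_closed[OF p] lvl_closed[OF q] by (simp add: possibility_capacities_def e)
    then show ?thesis using that by (simp add: max_def mult_right_mono)
  qed
  show ?thesis
    unfolding m_def[symmetric]
  proof (rule antisym)
    show "Lv X \<nu> m \<le> max (Lv X \<nu> \<psi>) (Lv X \<nu> \<phi>)"
    proof (rule Lv_least)
      fix s :: real assume s: "s \<in> {0<..1}"
      show "\<nu> (lvl X m s) * s \<le> max (Lv X \<nu> \<psi>) (Lv X \<nu> \<phi>)"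
        using t[of s] s Lv_upper[OF c p s] Lv_upper[OF c q s] by auto
    qed
    have "Lv X \<nu> \<psi> \<le> Lv X \<nu> m"
    proof (rule Lv_least)
      fix s :: real assume s: "s \<in> {0<..1}"
      show "\<nu> (lvl X \<psi> s) * s \<le> Lv X \<nu> m" using t[of s] s Lv_upper[OF c mc s] by auto
    qed
    moreover have "Lv X \<nu> \<phi> \<le> Lv X \<nu> m"
    proof (rule Lv_least)
      fix s :: real assume s: "s \<in> {0<..1}"
      show "\<nu> (lvl X \<phi> s) * s \<le> Lv X \<nu> m" using t[of s] s Lv_upper[OF c mc s] by auto
    qed
    ultimately show "max (Lv X \<nu> \<psi>) (Lv X \<nu> \<phi>) \<le> Lv X \<nu> m" by simp
  qed
qed

lemma lX_in_SX:
  assumes n: "\<nu> \<in> possibility_capacities X"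
  shows "lX X \<nu> \<in> SX X"
proof -
  have c: "capacity X \<nu>" using n by (simp add: possibility_capacities_def)
  have r: "\<forall>\<phi>\<in>CXI X. lX X \<nu> \<phi> \<in> {0..1}" using Lv_range[OF c] by (simp add: lX_eq)
  have o: "lX X \<nu> (restrict (\<lambda>x. 1) (topspace X)) = 1"
    using Lv_one[OF c] one_CXI[of X] by (simp add: lX_eq)
  have h: "\<forall>c\<in>{0..1::real}. \<forall>\<phi>\<in>CXI X.
          lX X \<nu> (restrict (\<lambda>x. c * \<phi> x) (topspace X)) = c * lX X \<nu> \<phi>"
  proof (intro ballI)
    fix a :: real and \<phi> assume a: "a \<in> {0..1}" and p: "\<phi> \<in> CXI X"
    then show "lX X \<nu> (restrict (\<lambda>x. a * \<phi> x) (topspace X)) = a * lX X \<nu> \<phi>"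
      using lX_eq[OF smult_CXI[OF p, of a]] lX_eq[OF p] Lv_smult[OF c p, of a] by simp
  qed
  have m: "\<forall>\<psi>\<in>CXI X. \<forall>\<phi>\<in>CXI X.
          lX X \<nu> (restrict (\<lambda>x. max (\<psi> x) (\<phi> x)) (topspace X)) = max (lX X \<nu> \<psi>) (lX X \<nu> \<phi>)"
  proof (intro ballI)
    fix \<psi> \<phi> assume p: "\<psi> \<in> CXI X" and q: "\<phi> \<in> CXI X"
    then show "lX X \<nu> (restrict (\<lambda>x. max (\<psi> x) (\<phi> x)) (topspace X)) = max (lX X \<nu> \<psi>) (lX X \<nu> \<phi>)"
      using lX_eq[OF max_CXI[OF p q]] lX_eq[OF p] lX_eq[OF q] Lv_max[OF n p q] by simp
  qed
  have "lX X \<nu> \<in> extensional (CXI X)" by (simp add: lX_def)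
  then show ?thesis unfolding SX_def using r o h m by blast
qed


definition Sset :: "'a topology \<Rightarrow> 'a set \<Rightarrow> ('a \<Rightarrow> real) set" where
  "Sset X F = {\<psi>. \<psi> \<in> CXI X \<and> (\<forall>x\<in>F. \<psi> x = 1)}"

definition numap :: "'a topology \<Rightarrow> (('a \<Rightarrow> real) \<Rightarrow> real) \<Rightarrow> 'a set \<Rightarrow> real" where
  "numap X \<upsilon> F = (if closedin X F then (INF \<psi>\<in>Sset X F. \<upsilon> \<psi>) else undefined)"

lemma one_Sset: "closedin X F \<Longrightarrow> restrict (\<lambda>x. 1) (topspace X) \<in> Sset X F"
  using closedin_subset[of X F] one_CXI[of X] by (auto simp: Sset_def)

lemma Sset_bdd: "\<upsilon> \<in> SX X \<Longrightarrow> bdd_below (\<upsilon> ` Sset X F)"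
  by (rule bdd_belowI2[where m=0]) (auto simp: Sset_def dest: SX_range)

lemma nu_lower: "\<upsilon> \<in> SX X \<Longrightarrow> closedin X F \<Longrightarrow> \<psi> \<in> Sset X F \<Longrightarrow> numap X \<upsilon> F \<le> \<upsilon> \<psi>"
  unfolding numap_def by (simp add: cINF_lower Sset_bdd)

lemma nu_greatest: "closedin X F \<Longrightarrow> (\<And>\<psi>. \<psi> \<in> Sset X F \<Longrightarrow> m \<le> \<upsilon> \<psi>) \<Longrightarrow> m \<le> numap X \<upsilon> F"
  unfolding numap_def using one_Sset[of X F] by (auto intro!: cINF_greatest)

lemma nu_less: "\<upsilon> \<in> SX X \<Longrightarrow> closedin X F \<Longrightarrow> numap X \<upsilon> F < a \<Longrightarrow> \<exists>\<psi>\<in>Sset X F. \<upsilon> \<psi> < a"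
proof -
  assume a: "\<upsilon> \<in> SX X" "closedin X F" "numap X \<upsilon> F < a"
  have ne: "Sset X F \<noteq> {}" using one_Sset[OF a(2)] by blast
  show ?thesis using a(3) cINF_less_iff[OF ne Sset_bdd[OF a(1)], of a] a(2) by (simp add: numap_def)
qed

lemma nu_range: "\<upsilon> \<in> SX X \<Longrightarrow> closedin X F \<Longrightarrow> 0 \<le> numap X \<upsilon> F \<and> numap X \<upsilon> F \<le> 1"
  using nu_lower[OF _ _ one_Sset, of \<upsilon> X F] SX_one[of \<upsilon> X]
    nu_greatest[of X F 0 \<upsilon>] by (auto simp: Sset_def dest: SX_range)

lemma trunc:
  assumes u: "\<upsilon> \<in> SX X" and p: "\<phi> \<in> CXI X" and c0: "0 < c" and c1: "c \<le> 1"
  shows "restrict (\<lambda>x. min 1 (\<phi> x / c)) (topspace X) \<in> CXI X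
      \<and> c * \<upsilon> (restrict (\<lambda>x. min 1 (\<phi> x / c)) (topspace X)) \<le> \<upsilon> \<phi>"
proof -
  define \<theta> where "\<theta> = restrict (\<lambda>x. min 1 (\<phi> x / c)) (topspace X)"
  have "continuous_map X euclideanreal (\<lambda>x. min 1 (\<phi> x / c))"
    using CXI_cont[OF p] c0 by (auto intro!: continuous_intros)
  moreover have "0 \<le> min 1 (\<phi> x / c) \<and> min 1 (\<phi> x / c) \<le> 1" if "x \<in> topspace X" for x
    using CXI_range[OF p that] c0 by auto
  ultimately have ch: "\<theta> \<in> CXI X" unfolding \<theta>_def by (rule restrict_CXI)
  have "\<upsilon> (restrict (\<lambda>x. c * \<theta> x) (topspace X)) \<le> \<upsilon> \<phi>"
  proof (rule SX_mono[OF u smult_CXI[OF ch] p])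
    show "0 \<le> c" "c \<le> 1" using c0 c1 by auto
    fix x assume x: "x \<in> topspace X"
    have "c * min 1 (\<phi> x / c) \<le> \<phi> x"
    proof (cases "\<phi> x / c \<le> 1")
      case True then show ?thesis using c0 by simp
    next
      case False then show ?thesis using c0 by (simp add: pos_divide_le_eq)
    qed
    then show "restrict (\<lambda>x. c * \<theta> x) (topspace X) x \<le> \<phi> x" using x by (simp add: \<theta>_def)
  qed
  then show ?thesis using ch SX_smult[OF u _ c1 ch] c0 unfolding \<theta>_def by simp
qed

lemma numap_poss:
  assumes u: "\<upsilon> \<in> SX X"
  shows "numap X \<upsilon> \<in> possibility_capacities X"
proof -
  let ?\<nu> = "numap X \<upsilon>"
  have mono: "?\<nu> F \<le> ?\<nu> G" if "closedin X F" "closedin X G" "F \<subseteq> G" for F G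
  proof (rule nu_greatest[OF that(2)])
    fix \<psi> assume "\<psi> \<in> Sset X G"
    then have "\<psi> \<in> Sset X F" using that(3) by (auto simp: Sset_def)
    then show "?\<nu> F \<le> \<upsilon> \<psi>" by (rule nu_lower[OF u that(1)])
  qed
  have top: "?\<nu> (topspace X) = 1"
  proof (rule antisym)
    show "?\<nu> (topspace X) \<le> 1" using nu_range[OF u] by simp
    show "1 \<le> ?\<nu> (topspace X)"
    proof (rule nu_greatest)
      fix \<psi> assume "\<psi> \<in> Sset X (topspace X)"
      then have "\<psi> = restrict (\<lambda>x. 1) (topspace X)"
        by (intro CXI_eqI) (auto simp: Sset_def one_CXI)
      then show "1 \<le> \<upsilon> \<psi>" using SX_one[OF u] by simp
    qed simp
  qed
  have emp: "?\<nu> {} = 0"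
  proof (rule antisym)
    have "restrict (\<lambda>x. 0) (topspace X) \<in> Sset X {}" by (simp add: Sset_def zero_CXI)
    then show "?\<nu> {} \<le> 0" using nu_lower[OF u, of "{}"] SX_zero[OF u] by force
    show "0 \<le> ?\<nu> {}" using nu_range[OF u, of "{}"] by simp
  qed
  have usc: "\<exists>U. openin X U \<and> F \<subseteq> U \<and> (\<forall>B. closedin X B \<and> B \<subseteq> U \<longrightarrow> ?\<nu> B < a)"
    if F: "closedin X F" and Fa: "?\<nu> F < a" for F a
  proof -
    obtain \<psi> where ps: "\<psi> \<in> Sset X F" and pa: "\<upsilon> \<psi> < a" using nu_less[OF u F Fa] by blast
    have p: "\<psi> \<in> CXI X" using ps by (simp add: Sset_def)
    have a0: "a > 0" using pa SX_range[OF u p] by simp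
    define c where "c = (\<upsilon> \<psi> / a + 1) / 2"
    have q: "\<upsilon> \<psi> / a < 1" using pa a0 by simp
    have c0: "0 < c" and c1: "c < 1" and ca: "\<upsilon> \<psi> < c * a"
      using q SX_range[OF u p] a0 by (auto simp: c_def field_simps)
    define U where "U = {x \<in> topspace X. \<psi> x \<in> {c<..}}"
    have "openin X U" unfolding U_def by (rule openin_continuous_map_preimage[OF CXI_cont[OF p]]) auto
    moreover have "F \<subseteq> U" using ps closedin_subset[OF F] c1 by (auto simp: Sset_def U_def)
    moreover have "?\<nu> B < a" if B: "closedin X B" "B \<subseteq> U" for B
    proof -
      define \<theta> where "\<theta> = restrict (\<lambda>x. min 1 (\<psi> x / c)) (topspace X)"
      have ch: "\<theta> \<in> CXI X" and cb: "c * \<upsilon> \<theta> \<le> \<upsilon> \<psi>"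
        using trunc[OF u p c0 less_imp_le[OF c1]] unfolding \<theta>_def by auto
      have "\<theta> \<in> Sset X B"
        using ch B(2) c0 by (auto simp: Sset_def \<theta>_def U_def)
      then have "?\<nu> B \<le> \<upsilon> \<theta>" by (rule nu_lower[OF u B(1)])
      moreover have "c * \<upsilon> \<theta> < c * a" using cb ca by simp
      then have "\<upsilon> \<theta> < a" using c0 by simp
      ultimately show ?thesis by simp
    qed
    ultimately show ?thesis by blast
  qed
  have un: "?\<nu> (A \<union> B) = max (?\<nu> A) (?\<nu> B)" if A: "closedin X A" and B: "closedin X B" for A B
  proof (rule antisym)
    have AB: "closedin X (A \<union> B)" using A B by auto
    show "max (?\<nu> A) (?\<nu> B) \<le> ?\<nu> (A \<union> B)"
      using mono[OF A AB] mono[OF B AB] by simp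
    show "?\<nu> (A \<union> B) \<le> max (?\<nu> A) (?\<nu> B)"
    proof (rule field_le_epsilon)
      fix e :: real assume e: "0 < e"
      obtain \<phi> where ph: "\<phi> \<in> Sset X A" "\<upsilon> \<phi> < ?\<nu> A + e" using nu_less[OF u A, of "?\<nu> A + e"] e by auto
      obtain \<psi> where ps: "\<psi> \<in> Sset X B" "\<upsilon> \<psi> < ?\<nu> B + e" using nu_less[OF u B, of "?\<nu> B + e"] e by auto
      have p: "\<phi> \<in> CXI X" and q: "\<psi> \<in> CXI X" using ph ps by (auto simp: Sset_def)
      have "restrict (\<lambda>x. max (\<phi> x) (\<psi> x)) (topspace X) \<in> Sset X (A \<union> B)"
        using max_CXI[OF p q] ph(1) ps(1) closedin_subset[OF A] closedin_subset[OF B]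
          CXI_range[OF p] CXI_range[OF q]
        by (auto simp: Sset_def max_def) (meson order.antisym subsetD)+
      then have "?\<nu> (A \<union> B) \<le> max (\<upsilon> \<phi>) (\<upsilon> \<psi>)"
        using nu_lower[OF u AB] SX_max[OF u p q] by metis
      then show "?\<nu> (A \<union> B) \<le> max (?\<nu> A) (?\<nu> B) + e" using ph(2) ps(2) by auto
    qed
  qed
  have "capacity X ?\<nu>"
    unfolding capacity_def using nu_range[OF u] top emp mono usc
    by (auto simp: extensional_def numap_def)
  then show ?thesis using un by (simp add: possibility_capacities_def)
qed


primrec mseq :: "(nat \<Rightarrow> 'a \<Rightarrow> real) \<Rightarrow> nat \<Rightarrow> 'a \<Rightarrow> real" where
  "mseq f 0 = (\<lambda>x. 0)"
| "mseq f (Suc m) = (\<lambda>x. max (mseq f m x) (f m x))"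

lemma mseq_ge: "k < m \<Longrightarrow> f k x \<le> mseq f m x"
  by (induction m) (auto simp: less_Suc_eq max_def)

lemma mseq_bound:
  assumes u: "\<upsilon> \<in> SX X" and f: "\<And>k. k < m \<Longrightarrow> f k \<in> CXI X"
    and b: "\<And>k. k < m \<Longrightarrow> \<upsilon> (f k) \<le> B" and B: "0 \<le> B"
  shows "restrict (mseq f m) (topspace X) \<in> CXI X \<and> \<upsilon> (restrict (mseq f m) (topspace X)) \<le> B"
  using f b
proof (induction m)
  case 0
  have e0: "restrict (mseq f 0) (topspace X) = restrict (\<lambda>x. 0) (topspace X)" by simp
  have "restrict (\<lambda>x. 0) (topspace X) \<in> CXI X \<and> \<upsilon> (restrict (\<lambda>x. 0) (topspace X)) \<le> B"
    using zero_CXI[of X] SX_zero[OF u] B by simp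
  then show ?case using e0 by metis
next
  case (Suc m)
  define g where "g = restrict (mseq f m) (topspace X)"
  have pr: "\<And>k. k < m \<Longrightarrow> f k \<in> CXI X" "\<And>k. k < m \<Longrightarrow> \<upsilon> (f k) \<le> B" using Suc.prems by auto
  have "g \<in> CXI X \<and> \<upsilon> g \<le> B" unfolding g_def by (rule Suc.IH[OF pr])
  then have IH: "g \<in> CXI X" "\<upsilon> g \<le> B" by auto
  have fm: "f m \<in> CXI X" "\<upsilon> (f m) \<le> B" using Suc by auto
  have e: "restrict (mseq f (Suc m)) (topspace X) = restrict (\<lambda>x. max (g x) (f m x)) (topspace X)"
    by (simp add: g_def restrict_def fun_eq_iff)
  show ?case unfolding e
  proof (rule conjI)
    show "restrict (\<lambda>x. max (g x) (f m x)) (topspace X) \<in> CXI X" by (rule max_CXI[OF IH(1) fm(1)])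
    show "\<upsilon> (restrict (\<lambda>x. max (g x) (f m x)) (topspace X)) \<le> B"
      unfolding SX_max[OF u IH(1) fm(1)] using IH fm by simp
  qed
qed

lemma Lv_numap:
  assumes u: "\<upsilon> \<in> SX X" and p: "\<phi> \<in> CXI X"
  shows "Lv X (numap X \<upsilon>) \<phi> = \<upsilon> \<phi>"
proof -
  let ?\<nu> = "numap X \<upsilon>"
  have c: "capacity X ?\<nu>" using numap_poss[OF u] by (simp add: possibility_capacities_def)
  show ?thesis
  proof (rule antisym)
    show "Lv X ?\<nu> \<phi> \<le> \<upsilon> \<phi>"
    proof (rule Lv_least)
      fix s :: real assume s: "s \<in> {0<..1}"
      define \<theta> where "\<theta> = restrict (\<lambda>x. min 1 (\<phi> x / s)) (topspace X)"
      have th: "\<theta> \<in> CXI X" and tb: "s * \<upsilon> \<theta> \<le> \<upsilon> \<phi>"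
        using trunc[OF u p, of s] s unfolding \<theta>_def by auto
      have "\<theta> \<in> Sset X (lvl X \<phi> s)"
        using th s by (auto simp: Sset_def \<theta>_def lvl_def)
      then have "?\<nu> (lvl X \<phi> s) \<le> \<upsilon> \<theta>" by (rule nu_lower[OF u lvl_closed[OF p]])
      then have "?\<nu> (lvl X \<phi> s) * s \<le> \<upsilon> \<theta> * s" using s by (simp add: mult_right_mono)
      then show "?\<nu> (lvl X \<phi> s) * s \<le> \<upsilon> \<phi>" using tb by (simp add: mult.commute)
    qed
    show "\<upsilon> \<phi> \<le> Lv X ?\<nu> \<phi>"
    proof (rule field_le_epsilon)
      fix e :: real assume e: "0 < e"
      let ?L = "Lv X ?\<nu> \<phi>"
      obtain n0 where n0: "inverse (real (Suc n0)) < e / 2" using reals_Archimedean[of "e/2"] e by auto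
      define N where "N = Suc n0"
      have N0: "real N > 0" by (simp add: N_def)
      have Ne: "1 / real N < e / 2" using n0 by (simp add: N_def inverse_eq_divide)
      define F where "F k = lvl X \<phi> (real k / real N)" for k
      have Fc: "closedin X (F k)" for k unfolding F_def by (rule lvl_closed[OF p])
      have "\<forall>k. \<exists>\<psi>. \<psi> \<in> Sset X (F k) \<and> \<upsilon> \<psi> < ?\<nu> (F k) + e / 2"
      proof
        fix k
        have "?\<nu> (F k) < ?\<nu> (F k) + e / 2" using e by simp
        then show "\<exists>\<psi>. \<psi> \<in> Sset X (F k) \<and> \<upsilon> \<psi> < ?\<nu> (F k) + e / 2"
          using nu_less[OF u Fc] by blast
      qed
      then obtain \<psi> where ps: "\<And>k. \<psi> k \<in> Sset X (F k)" "\<And>k. \<upsilon> (\<psi> k) < ?\<nu> (F k) + e / 2"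
        by metis
      have pc: "\<psi> k \<in> CXI X" for k using ps(1)[of k] by (simp add: Sset_def)
      define ck where "ck k = min 1 ((real k + 1) / real N)" for k
      have ck0: "0 \<le> ck k" "ck k \<le> 1" for k using N0 by (auto simp: ck_def)
      define f where "f k = restrict (\<lambda>x. ck k * \<psi> k x) (topspace X)" for k
      have fc: "f k \<in> CXI X" for k unfolding f_def by (rule smult_CXI[OF pc ck0])
      have L0: "0 \<le> ?L" using Lv_range[OF c p] by simp
      define B where "B = ?L + 1 / real N + e / 2"
      have B0: "0 \<le> B" using L0 N0 e by (simp add: B_def)
      have fb: "\<upsilon> (f k) \<le> B" if k: "k < N" for k
      proof -
        have ckk: "ck k = (real k + 1) / real N" using k N0 by (simp add: ck_def)
        have nr: "0 \<le> ?\<nu> (F k)" "?\<nu> (F k) \<le> 1" using nu_range[OF u Fc] by auto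
        have "\<upsilon> (f k) = ck k * \<upsilon> (\<psi> k)" unfolding f_def by (rule SX_smult[OF u ck0 pc])
        also have "\<dots> \<le> ck k * (?\<nu> (F k) + e / 2)"
          using ps(2)[of k] ck0[of k] by (simp add: mult_left_mono)
        also have "\<dots> \<le> ck k * ?\<nu> (F k) + e / 2"
          using ck0[of k] e by (simp add: distrib_left mult_left_le_one_le)
        also have "ck k * ?\<nu> (F k) = ?\<nu> (F k) * (real k / real N) + ?\<nu> (F k) / real N"
          unfolding ckk by (simp add: field_simps) (simp add: add_divide_distrib)
        also have "?\<nu> (F k) * (real k / real N) \<le> ?L"
        proof (cases "k = 0")
          case True then show ?thesis using L0 by simp
        next
          case False
          then have "real k / real N \<in> {0<..1}" using k N0 by auto
          then show ?thesis unfolding F_def by (rule Lv_upper[OF c p])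
        qed
        moreover have "?\<nu> (F k) / real N \<le> 1 / real N" using nr N0 by (simp add: divide_right_mono)
        ultimately show ?thesis unfolding B_def by linarith
      qed
      have G: "restrict (mseq f N) (topspace X) \<in> CXI X \<and> \<upsilon> (restrict (mseq f N) (topspace X)) \<le> B"
        by (rule mseq_bound[OF u fc fb B0])
      have pw: "\<phi> x \<le> restrict (mseq f N) (topspace X) x" if x: "x \<in> topspace X" for x
      proof -
        have r: "0 \<le> \<phi> x" "\<phi> x \<le> 1" using CXI_range[OF p x] by auto
        define j where "j = nat \<lfloor>real N * \<phi> x\<rfloor>"
        have fl: "of_int \<lfloor>real N * \<phi> x\<rfloor> \<le> real N * \<phi> x" "real N * \<phi> x < of_int \<lfloor>real N * \<phi> x\<rfloor> + 1"
          by linarith+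
        have jr: "real j = of_int \<lfloor>real N * \<phi> x\<rfloor>" using r N0 by (simp add: j_def)
        define k where "k = min (N - 1) j"
        have kN: "k < N" using N0 by (simp add: k_def N_def)
        have "real k \<le> real j" by (simp add: k_def)
        then have k1: "real k \<le> real N * \<phi> x" using jr fl by linarith
        have k2: "\<phi> x \<le> ck k"
        proof (cases "j < N")
          case True
          then have "k = j" by (simp add: k_def)
          then have "\<phi> x \<le> (real k + 1) / real N" using jr fl N0 by (simp add: field_simps)
          then show ?thesis using r by (simp add: ck_def)
        next
          case False
          then have "k = N - 1" by (simp add: k_def)
          then have "ck k = 1" using N0 by (simp add: ck_def N_def)
          then show ?thesis using r by simp
        qed
        have "x \<in> F k" using k1 x r N0 by (simp add: F_def lvl_def field_simps)
        then have "\<psi> k x = 1" using ps(1)[of k] by (simp add: Sset_def)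
        then have "f k x = ck k" using x by (simp add: f_def)
        then show ?thesis using k2 mseq_ge[OF kN, of f x] x by simp
      qed
      have "\<upsilon> \<phi> \<le> \<upsilon> (restrict (mseq f N) (topspace X))"
        by (rule SX_mono[OF u p conjunct1[OF G] pw])
      also have "\<dots> \<le> B" using G by simp
      finally show "\<upsilon> \<phi> \<le> ?L + e" using Ne unfolding B_def by simp
    qed
  qed
qed

theorem theorem3:
  fixes X :: "'a topology"
  assumes "compact_space X" and "Hausdorff_space X"
  shows "lX X ` possibility_capacities X = SX X"
proof
  show "lX X ` possibility_capacities X \<subseteq> SX X" using lX_in_SX by blast
  show "SX X \<subseteq> lX X ` possibility_capacities X"
  proof
    fix \<upsilon> assume u: "\<upsilon> \<in> SX X"
    have "lX X (numap X \<upsilon>) = \<upsilon>"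
    proof
      fix \<phi>
      show "lX X (numap X \<upsilon>) \<phi> = \<upsilon> \<phi>"
      proof (cases "\<phi> \<in> CXI X")
        case True then show ?thesis using lX_eq[OF True] Lv_numap[OF u True] by simp
      next
        case False
        have "\<upsilon> \<in> extensional (CXI X)" using u by (simp add: SX_def)
        then have "\<upsilon> \<phi> = undefined" using False by (rule extensional_arb)
        moreover have "lX X (numap X \<upsilon>) \<phi> = undefined" using False by (simp add: lX_def)
        ultimately show ?thesis by simp
      qed
    qed
    then show "\<upsilon> \<in> lX X ` possibility_capacities X" using numap_poss[OF u] by force
  qed
qed

end
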